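(* Let $\mathbf{IL}\mathsf X$ be a Horn logic and $A$ a formula. If a systematic $\mathbf{IL}\mathsf X$-tableau for $\{\neg A\}$ closes, then $A$ is $\mathbf{IL}\mathsf X$-valid, i.e. $M,x\Vdash A$ for every $\mathbf{IL}\mathsf X$-model $M$ and every world $x$ of $M$.
   Context: Formulas: built from a countable set $\mathsf{Prop}$ of propositional variables by $\neg$, $\to$, unary $\Box$ and binary $\rhd$. $\mathbf{IL}$ is the modal logic with axioms all instances of propositional tautologies and the schemes $\Box(A\to B)\to(\Box A\to\Box B)$, $\Box(\Box A\to A)\to\Box A$, $\Box(A\to B)\to A\rhd B$, $(A\rhd B)\wedge(B\rhd C)\to A\rhd C$, $(A\rhd C)\wedge(B\rhd C)\to A\vee B\rhd C$, $A\rhd B\to(\Diamond A\to\Diamond B)$, $\Diamond A\rhd A$ ($\Diamond=\neg\Box\neg$), rules modus ponens and necessitation. An $\mathbf{IL}$-frame is $\langle W,R,S\rangle$ with $W\neq\emptyset$, $R$ transitive and Noetherian (no infinite chains $x_0Rx_1Rx_2\cdots$), $S$ ternary, $yS_xz$ meaning $(x,y,z)\in S$, each $S_x$ a reflexive transitive relation on $\{y:xRy\}$, and $xRyRz\Rightarrow yS_xz$. A model adds a valuation $V$; forcing standard for $\neg,\to$; $x\Vdash\Box A$ iff all $R$-successors force $A$; $x\Vdash A\rhd B$ iff for every $y$ with $xRy$, $y\Vdash A$ there is $z$ with $yS_xz$, $z\Vdash B$. $\mathbf{IL}\mathsf X$ is $\mathbf{IL}$ plus axiom schemes $\mathsf X$;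 it is Horn if there is a set $\mathcal C_{\mathsf X}$ of strict universal Horn sentences $\forall\cdots\forall(\varphi_1\wedge\dots\wedge\varphi_n\to\psi)$ ($n\ge0$, atomic $\varphi_i,\psi$) in the language $\{R,S\}$ such that an $\mathbf{IL}$-frame validates all theorems of $\mathbf{IL}\mathsf X$ iff it satisfies $\mathcal C_{\mathsf X}$; $\mathbf{IL}\mathsf X$-frames/models are those satisfying $\mathcal C_{\mathsf X}$. Labels: $0$; $\sigma Rn$ for a label $\sigma$, $n\in\mathbb N$; $\sigma S_\rho n$ for labels $\sigma,\rho$ with $\rho$ a strict non-empty prefix of $\sigma$. Extended formulas also allow unary operators $\Box_\rho$, $\rho$ a label. Labelled formula: $\sigma::A$. For a set $\Lambda$ of labels, $\mathbf R^\Lambda,\mathbf S^\Lambda$ are the least relations on $\Lambda$ with: (1) $\sigma,\sigma Rn\in\Lambda\Rightarrow\sigma\mathbf R\,\sigma Rn$; (2) $\mathbf R$ transitive; (3) $\sigma,\rho,\sigma S_\rho n\in\Lambda\Rightarrow\sigma\mathbf S_\rho\,\sigma S_\rho n$; (4) $\sigma\mathbf R\tau\Rightarrow\tau\mathbf S_\sigma\tau$; (5) $\rho\mathbf R\sigma\mathbf R\tau\Rightarrow\sigma\mathbf S_\rho\tau$; (6) $\sigma\mathbf S_\rho\tau\mathbf S_\rho\upsilon\Rightarrow\sigma\mathbf S_\rho\upsilon$; (7) $\sigma\mathbf S_\rho\tau\Rightarrow\rho\mathbf R\sigma,\rho\mathbf R\tau$; (8) $\langle\Lambda,\mathbf R^\Lambda,\mathbf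 S^\Lambda\rangle\models\mathcal C_{\mathsf X}$ (where $\sigma\mathbf S_\rho\tau$ means $(\rho,\sigma,\tau)\in\mathbf S^\Lambda$). For a branch $\mathcal B$, $\mathrm{lab}(\mathcal B)$ is the set of labels on it and relations refer to $\mathbf R^{\mathrm{lab}(\mathcal B)},\mathbf S^{\mathrm{lab}(\mathcal B)}$. A branch is closed if it contains $\sigma::A$ and $\sigma::\neg A$ for some $\sigma,A$, otherwise open. Systematic $\mathbf{IL}\mathsf X$-tableau for finite $\Gamma$: built in stages $T_0\subseteq T_1\subseteq\cdots$, nodes marked awake, asleep or finished. Stage 0: nodes $0::A$, $A\in\Gamma$, one below another, all awake. Stage $n+1$: choose an awake node $\sigma::A$ closest to the root (leftmost among ties). If $A$ is $p$ or $\neg p$ ($p\in\mathsf{Prop}$), mark it finished. Otherwise (new nodes marked awake; "extend" = append at the bottom): $\neg\neg B$: extend each open branch through it with $\sigma::B$; finished. $B\to C$: split each open branch through it, left $\sigma::\neg B$, right $\sigma::C$; finished. $\neg(B\to C)$: extend with $\sigma::B,\sigma::\neg C$; finished. $\Box B$: for each open branch $\mathcal B$ through it and each $\tau\in\mathrm{lab}(\mathcal B)$ with $\sigma\mathbf R\tau$, extend with $\tau::B$; asleep. $\neg\Box B$: for each open branch $\mathcal B$ through it, $n$ least with $\sigma Rn\notin\mathrm{lab}(\mathcal B)$, extend with $\sigma Rn::\neg B,\sigma Rn::\Box B$; finished; also mark awake every node $\tau::\Box D$, $\tau::D\rhd E$ on $\mathcal B$ with $\tau\mathbf R\,\sigma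 Rn$ and every $\tau::\Box_\kappa D$ on $\mathcal B$ with $\tau\mathbf S_\kappa\,\sigma Rn$. $\Box_\rho B$: for each branch $\mathcal B$ through it and each $\tau\in\mathrm{lab}(\mathcal B)$ with $\sigma\mathbf S_\rho\tau$, extend with $\tau::B$; asleep. $\neg\Box_\rho B$: for each open branch, $n$ least with $\sigma S_\rho n\notin\mathrm{lab}(\mathcal B)$, extend with $\sigma S_\rho n::\neg B,\sigma S_\rho n::\Box B$; finished; reawaken as in the $\neg\Box$ case with new label $\sigma S_\rho n$. $B\rhd C$: for each open branch $\mathcal B$ through it and each $\tau\in\mathrm{lab}(\mathcal B)$ with $\sigma\mathbf R\tau$, split, left $\tau::\neg B$, right $\tau::\neg\Box_\sigma\neg C$; asleep. $\neg(B\rhd C)$: for each open branch, $n$ least with $\sigma Rn\notin\mathrm{lab}(\mathcal B)$, extend with $\sigma Rn::B,\sigma Rn::\Box_\sigma\neg C,\sigma Rn::\Box\neg B$; finished; reawaken as in the $\neg\Box$ case. The systematic tableau is $\bigcup_iT_i$; it closes if all its branches are closed. *)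

theory Defs
  imports Main "HOL-Library.Sublist"
begin

datatype fm = Var nat | Neg fm | Imp fm fm | Box fm | Rhd fm fm

definition And :: "fm \<Rightarrow> fm \<Rightarrow> fm" where "And A B = Neg (Imp A (Neg B))"
definition Or :: "fm \<Rightarrow> fm \<Rightarrow> fm" where "Or A B = Imp (Neg A) B"
definition Dia :: "fm \<Rightarrow> fm" where "Dia A = Neg (Box (Neg A))"

(* S x y z  means  y S_x z, i.e. (x,y,z) \<in> S *)
definition IL_frame :: "'w set \<Rightarrow> ('w \<Rightarrow> 'w \<Rightarrow> bool) \<Rightarrow> ('w \<Rightarrow> 'w \<Rightarrow> 'w \<Rightarrow> bool) \<Rightarrow> bool" where
  "IL_frame W R S \<longleftrightarrow>
     W \<noteq> {} \<and>
     (\<forall>x y. R x y \<longrightarrow> x \<in> W \<and> y \<in> W) \<and>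
     (\<forall>x y z. R x y \<longrightarrow> R y z \<longrightarrow> R x z) \<and>
     \<not> (\<exists>f :: nat \<Rightarrow> 'w. \<forall>i. R (f i) (f (Suc i))) \<and>
     (\<forall>x y z. S x y z \<longrightarrow> x \<in> W \<and> R x y \<and> R x z) \<and>
     (\<forall>x y. R x y \<longrightarrow> S x y y) \<and>
     (\<forall>x y z u. S x y z \<longrightarrow> S x z u \<longrightarrow> S x y u) \<and>
     (\<forall>x y z. R x y \<longrightarrow> R y z \<longrightarrow> S x y z)"

fun forces :: "('w \<Rightarrow> 'w \<Rightarrow> bool) \<Rightarrow> ('w \<Rightarrow> 'w \<Rightarrow> 'w \<Rightarrow> bool) \<Rightarrow> (nat \<Rightarrow> 'w \<Rightarrow> bool)
                 \<Rightarrow> 'w \<Rightarrow> fm \<Rightarrow> bool" where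
  "forces R S V x (Var p) = V p x"
| "forces R S V x (Neg A) = (\<not> forces R S V x A)"
| "forces R S V x (Imp A B) = (forces R S V x A \<longrightarrow> forces R S V x B)"
| "forces R S V x (Box A) = (\<forall>y. R x y \<longrightarrow> forces R S V y A)"
| "forces R S V x (Rhd A B) =
     (\<forall>y. R x y \<longrightarrow> forces R S V y A \<longrightarrow> (\<exists>z. S x y z \<and> forces R S V z B))"

definition frame_valid :: "'w set \<Rightarrow> ('w \<Rightarrow> 'w \<Rightarrow> bool) \<Rightarrow> ('w \<Rightarrow> 'w \<Rightarrow> 'w \<Rightarrow> bool) \<Rightarrow> fm \<Rightarrow> bool" where
  "frame_valid W R S A \<longleftrightarrow> (\<forall>V. \<forall>x\<in>W. forces R S V x A)"

(* propositional evaluation: modal subformulas are treated as atoms *)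
fun peval :: "(fm \<Rightarrow> bool) \<Rightarrow> fm \<Rightarrow> bool" where
  "peval I (Var p) = I (Var p)"
| "peval I (Neg A) = (\<not> peval I A)"
| "peval I (Imp A B) = (peval I A \<longrightarrow> peval I B)"
| "peval I (Box A) = I (Box A)"
| "peval I (Rhd A B) = I (Rhd A B)"

(* instances of propositional tautologies *)
definition taut :: "fm \<Rightarrow> bool" where "taut A \<longleftrightarrow> (\<forall>I. peval I A)"

fun subst :: "(nat \<Rightarrow> fm) \<Rightarrow> fm \<Rightarrow> fm" where
  "subst s (Var p) = s p"
| "subst s (Neg A) = Neg (subst s A)"
| "subst s (Imp A B) = Imp (subst s A) (subst s B)"
| "subst s (Box A) = Box (subst s A)"
| "subst s (Rhd A B) = Rhd (subst s A) (subst s B)"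

(* X is a set of axiom schemes; its instances are all substitution instances *)
inductive ILX_thm :: "fm set \<Rightarrow> fm \<Rightarrow> bool" for X where
  tautI: "taut A \<Longrightarrow> ILX_thm X A"
| K: "ILX_thm X (Imp (Box (Imp A B)) (Imp (Box A) (Box B)))"
| L: "ILX_thm X (Imp (Box (Imp (Box A) A)) (Box A))"
| J1: "ILX_thm X (Imp (Box (Imp A B)) (Rhd A B))"
| J2: "ILX_thm X (Imp (And (Rhd A B) (Rhd B C)) (Rhd A C))"
| J3: "ILX_thm X (Imp (And (Rhd A C) (Rhd B C)) (Rhd (Or A B) C))"
| J4: "ILX_thm X (Imp (Rhd A B) (Imp (Dia A) (Dia B)))"
| J5: "ILX_thm X (Rhd (Dia A) A)"
| Xax: "B \<in> X \<Longrightarrow> ILX_thm X (subst s B)"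
| MP: "ILX_thm X (Imp A B) \<Longrightarrow> ILX_thm X A \<Longrightarrow> ILX_thm X B"
| Nec: "ILX_thm X A \<Longrightarrow> ILX_thm X (Box A)"

definition frame_validates_ILX :: "fm set \<Rightarrow> 'w set \<Rightarrow> ('w \<Rightarrow> 'w \<Rightarrow> bool) \<Rightarrow> ('w \<Rightarrow> 'w \<Rightarrow> 'w \<Rightarrow> bool) \<Rightarrow> bool" where
  "frame_validates_ILX X W R S \<longleftrightarrow> (\<forall>A. ILX_thm X A \<longrightarrow> frame_valid W R S A)"

(* variables are natural numbers; HS i j k stands for the atom S(v_i,v_j,v_k),
   i.e. v_j S_{v_i} v_k *)
datatype hatom = HR nat nat | HS nat nat nat

(* a strict universal Horn sentence: (list of premises, conclusion), universally closed *)
type_synonym horn = "hatom list \<times> hatom"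

fun hholds :: "('w \<Rightarrow> 'w \<Rightarrow> bool) \<Rightarrow> ('w \<Rightarrow> 'w \<Rightarrow> 'w \<Rightarrow> bool) \<Rightarrow> (nat \<Rightarrow> 'w) \<Rightarrow> hatom \<Rightarrow> bool" where
  "hholds R S v (HR i j) = R (v i) (v j)"
| "hholds R S v (HS i j k) = S (v i) (v j) (v k)"

definition horn_sat :: "horn set \<Rightarrow> 'w set \<Rightarrow> ('w \<Rightarrow> 'w \<Rightarrow> bool) \<Rightarrow> ('w \<Rightarrow> 'w \<Rightarrow> 'w \<Rightarrow> bool) \<Rightarrow> bool" where
  "horn_sat C W R S \<longleftrightarrow>
     (\<forall>h\<in>C. \<forall>v. (\<forall>i. v i \<in> W) \<longrightarrow> (\<forall>a\<in>set (fst h). hholds R S v a) \<longrightarrow> hholds R S v (snd h))"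

definition ILX_model :: "horn set \<Rightarrow> 'w set \<Rightarrow> ('w \<Rightarrow> 'w \<Rightarrow> bool) \<Rightarrow> ('w \<Rightarrow> 'w \<Rightarrow> 'w \<Rightarrow> bool)
                          \<Rightarrow> (nat \<Rightarrow> 'w \<Rightarrow> bool) \<Rightarrow> bool" where
  "ILX_model C W R S V \<longleftrightarrow> IL_frame W R S \<and> horn_sat C W R S"

(* Root = 0;  LR \<sigma> n = \<sigma>Rn;  LS \<sigma> \<rho> n = \<sigma>S_\<rho>n *)
datatype label = Root | LR label nat | LS label label nat

(* extended formulas: additionally Box_\<rho> (EBoxL \<rho> B) *)
datatype efm = EVar nat | ENeg efm | EImp efm efm | EBox efm | ERhd efm efm | EBoxL label efm

fun emb :: "fm \<Rightarrow> efm" where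
  "emb (Var p) = EVar p"
| "emb (Neg A) = ENeg (emb A)"
| "emb (Imp A B) = EImp (emb A) (emb B)"
| "emb (Box A) = EBox (emb A)"
| "emb (Rhd A B) = ERhd (emb A) (emb B)"

(* RA \<sigma> \<tau>: \<sigma> R \<tau>;   SA \<rho> \<sigma> \<tau>: \<sigma> S_\<rho> \<tau>, i.e. (\<rho>,\<sigma>,\<tau>) \<in> S *)
datatype ratom = RA label label | SA label label label

fun hinst :: "(nat \<Rightarrow> label) \<Rightarrow> hatom \<Rightarrow> ratom" where
  "hinst v (HR i j) = RA (v i) (v j)"
| "hinst v (HS i j k) = SA (v i) (v j) (v k)"

inductive lrel :: "label set \<Rightarrow> horn set \<Rightarrow> ratom \<Rightarrow> bool" for \<Lambda> C where
  c1: "\<sigma> \<in> \<Lambda> \<Longrightarrow> LR \<sigma> n \<in> \<Lambda> \<Longrightarrow> lrel \<Lambda> C (RA \<sigma> (LR \<sigma> n))"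
| c2: "lrel \<Lambda> C (RA a b) \<Longrightarrow> lrel \<Lambda> C (RA b c) \<Longrightarrow> lrel \<Lambda> C (RA a c)"
| c3: "\<sigma> \<in> \<Lambda> \<Longrightarrow> \<rho> \<in> \<Lambda> \<Longrightarrow> LS \<sigma> \<rho> n \<in> \<Lambda> \<Longrightarrow> lrel \<Lambda> C (SA \<rho> \<sigma> (LS \<sigma> \<rho> n))"
| c4: "lrel \<Lambda> C (RA \<sigma> \<tau>) \<Longrightarrow> lrel \<Lambda> C (SA \<sigma> \<tau> \<tau>)"
| c5: "lrel \<Lambda> C (RA \<rho> \<sigma>) \<Longrightarrow> lrel \<Lambda> C (RA \<sigma> \<tau>) \<Longrightarrow> lrel \<Lambda> C (SA \<rho> \<sigma> \<tau>)"
| c6: "lrel \<Lambda> C (SA \<rho> \<sigma> \<tau>) \<Longrightarrow> lrel \<Lambda> C (SA \<rho> \<tau> \<upsilon>) \<Longrightarrow> lrel \<Lambda> C (SA \<rho> \<sigma> \<upsilon>)"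
| c7a: "lrel \<Lambda> C (SA \<rho> \<sigma> \<tau>) \<Longrightarrow> lrel \<Lambda> C (RA \<rho> \<sigma>)"
| c7b: "lrel \<Lambda> C (SA \<rho> \<sigma> \<tau>) \<Longrightarrow> lrel \<Lambda> C (RA \<rho> \<tau>)"
| c8: "h \<in> C \<Longrightarrow> (\<forall>i. v i \<in> \<Lambda>) \<Longrightarrow> (\<forall>a\<in>set (fst h). lrel \<Lambda> C (hinst v a))
        \<Longrightarrow> lrel \<Lambda> C (hinst v (snd h))"

datatype mark = Awake | Asleep | Finished

(* a tableau: a finite tree, nodes addressed by positions (paths of child indices);
   a node with one child has it at p@[0], a split node has children p@[0], p@[1] *)
type_synonym tableau = "nat list \<Rightarrow> (label \<times> efm \<times> mark) option"

definition is_leaf :: "tableau \<Rightarrow> nat list \<Rightarrow> bool" where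
  "is_leaf T q \<longleftrightarrow> T q \<noteq> None \<and> T (q @ [0]) = None"

definition branch_fms :: "tableau \<Rightarrow> nat list \<Rightarrow> (label \<times> efm) set" where
  "branch_fms T q = {(\<sigma>, A). \<exists>p m. prefix p q \<and> T p = Some (\<sigma>, A, m)}"

definition lab :: "tableau \<Rightarrow> nat list \<Rightarrow> label set" where
  "lab T q = fst ` branch_fms T q"

definition closed_set :: "(label \<times> efm) set \<Rightarrow> bool" where
  "closed_set F \<longleftrightarrow> (\<exists>\<sigma> A. (\<sigma>, A) \<in> F \<and> (\<sigma>, ENeg A) \<in> F)"

definition awake_at :: "tableau \<Rightarrow> nat list \<Rightarrow> bool" where
  "awake_at T p \<longleftrightarrow> (\<exists>\<sigma> A. T p = Some (\<sigma>, A, Awake))"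

(* breadth-first order: closer to the root first, leftmost among ties *)
definition bf_less :: "nat list \<Rightarrow> nat list \<Rightarrow> bool" where
  "bf_less p q \<longleftrightarrow> length p < length q \<or>
     (length p = length q \<and> (\<exists>r a b s t. p = r @ a # s \<and> q = r @ b # t \<and> a < b))"

definition selected :: "tableau \<Rightarrow> nat list \<Rightarrow> bool" where
  "selected T p \<longleftrightarrow> awake_at T p \<and> (\<forall>q. awake_at T q \<longrightarrow> q = p \<or> bf_less p q)"

(* what gets appended below a leaf: a chain of nodes, or successive splits *)
datatype pat = Chain "(label \<times> efm) list" | Splits "((label \<times> efm) \<times> (label \<times> efm)) list"

fun patmap :: "pat \<Rightarrow> nat list \<Rightarrow> (label \<times> efm) option" where
  "patmap (Chain fs) r =
     (if r \<noteq> [] \<and> set r \<subseteq> {0} \<and> length r \<le> length fs then Some (fs ! (length r - 1)) else None)"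
| "patmap (Splits ps) r =
     (if r \<noteq> [] \<and> set r \<subseteq> {0, 1} \<and> length r \<le> length ps
      then Some (if last r = 0 then fst (ps ! (length r - 1)) else snd (ps ! (length r - 1)))
      else None)"

definition enum_of :: "'a list \<Rightarrow> 'a set \<Rightarrow> bool" where
  "enum_of xs A \<longleftrightarrow> distinct xs \<and> set xs = A"

fun rule_pat :: "horn set \<Rightarrow> tableau \<Rightarrow> nat list \<Rightarrow> label \<Rightarrow> efm \<Rightarrow> pat \<Rightarrow> bool" where
  "rule_pat C T q \<sigma> (EVar p) P = (P = Chain [])"
| "rule_pat C T q \<sigma> (ENeg (EVar p)) P = (P = Chain [])"
| "rule_pat C T q \<sigma> (ENeg (ENeg B)) P =
     (P = (if closed_set (branch_fms T q) then Chain [] else Chain [(\<sigma>, B)]))"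
| "rule_pat C T q \<sigma> (EImp B D) P =
     (P = (if closed_set (branch_fms T q) then Chain [] else Splits [((\<sigma>, ENeg B), (\<sigma>, D))]))"
| "rule_pat C T q \<sigma> (ENeg (EImp B D)) P =
     (P = (if closed_set (branch_fms T q) then Chain [] else Chain [(\<sigma>, B), (\<sigma>, ENeg D)]))"
| "rule_pat C T q \<sigma> (EBox B) P =
     (if closed_set (branch_fms T q) then P = Chain []
      else (\<exists>ts. enum_of ts {\<tau> \<in> lab T q. lrel (lab T q) C (RA \<sigma> \<tau>)} \<and>
                 P = Chain (map (\<lambda>\<tau>. (\<tau>, B)) ts)))"
| "rule_pat C T q \<sigma> (ENeg (EBox B)) P =
     (P = (if closed_set (branch_fms T q) then Chain []
           else (let \<nu> = LR \<sigma> (LEAST n. LR \<sigma> n \<notin> lab T q)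
                 in Chain [(\<nu>, ENeg B), (\<nu>, EBox B)])))"
| "rule_pat C T q \<sigma> (EBoxL \<rho> B) P =
     (\<exists>ts. enum_of ts {\<tau> \<in> lab T q. lrel (lab T q) C (SA \<rho> \<sigma> \<tau>)} \<and>
           P = Chain (map (\<lambda>\<tau>. (\<tau>, B)) ts))"
| "rule_pat C T q \<sigma> (ENeg (EBoxL \<rho> B)) P =
     (P = (if closed_set (branch_fms T q) then Chain []
           else (let \<nu> = LS \<sigma> \<rho> (LEAST n. LS \<sigma> \<rho> n \<notin> lab T q)
                 in Chain [(\<nu>, ENeg B), (\<nu>, EBox B)])))"
| "rule_pat C T q \<sigma> (ERhd B D) P =
     (if closed_set (branch_fms T q) then P = Chain []
      else (\<exists>ts. enum_of ts {\<tau> \<in> lab T q. lrel (lab T q) C (RA \<sigma> \<tau>)} \<and>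
                 P = Splits (map (\<lambda>\<tau>. ((\<tau>, ENeg B), (\<tau>, ENeg (EBoxL \<sigma> (ENeg D))))) ts)))"
| "rule_pat C T q \<sigma> (ENeg (ERhd B D)) P =
     (P = (if closed_set (branch_fms T q) then Chain []
           else (let \<nu> = LR \<sigma> (LEAST n. LR \<sigma> n \<notin> lab T q)
                 in Chain [(\<nu>, B), (\<nu>, EBoxL \<sigma> (ENeg D)), (\<nu>, EBox (ENeg B))])))"

fun new_mark :: "efm \<Rightarrow> mark" where
  "new_mark (EBox B) = Asleep"
| "new_mark (EBoxL \<rho> B) = Asleep"
| "new_mark (ERhd B D) = Asleep"
| "new_mark _ = Finished"

fun new_label :: "tableau \<Rightarrow> nat list \<Rightarrow> label \<Rightarrow> efm \<Rightarrow> label option" where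
  "new_label T q \<sigma> (ENeg (EBox B)) = Some (LR \<sigma> (LEAST n. LR \<sigma> n \<notin> lab T q))"
| "new_label T q \<sigma> (ENeg (EBoxL \<rho> B)) = Some (LS \<sigma> \<rho> (LEAST n. LS \<sigma> \<rho> n \<notin> lab T q))"
| "new_label T q \<sigma> (ENeg (ERhd B D)) = Some (LR \<sigma> (LEAST n. LR \<sigma> n \<notin> lab T q))"
| "new_label T q \<sigma> _ = None"

definition reawake :: "horn set \<Rightarrow> tableau \<Rightarrow> nat list \<Rightarrow> label \<Rightarrow> efm \<Rightarrow> nat list \<Rightarrow> bool" where
  "reawake C T p \<sigma> A r \<longleftrightarrow>
     (\<exists>q \<nu>. is_leaf T q \<and> prefix p q \<and> \<not> closed_set (branch_fms T q) \<and> prefix r q \<and>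
        new_label T q \<sigma> A = Some \<nu> \<and>
        (\<exists>\<tau> B m. T r = Some (\<tau>, B, m) \<and>
           ((\<exists>D. B = EBox D) \<and> lrel (insert \<nu> (lab T q)) C (RA \<tau> \<nu>)
          \<or> (\<exists>D E. B = ERhd D E) \<and> lrel (insert \<nu> (lab T q)) C (RA \<tau> \<nu>)
          \<or> (\<exists>\<kappa> D. B = EBoxL \<kappa> D \<and> lrel (insert \<nu> (lab T q)) C (SA \<kappa> \<tau> \<nu>)))))"

definition sys_step :: "horn set \<Rightarrow> tableau \<Rightarrow> tableau \<Rightarrow> bool" where
  "sys_step C T T' \<longleftrightarrow>
     ((\<nexists>p. awake_at T p) \<and> T' = T) \<or>
     (\<exists>p \<sigma> A P. selected T p \<and> T p = Some (\<sigma>, A, Awake) \<and>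
        (\<forall>q. is_leaf T q \<and> prefix p q \<longrightarrow> rule_pat C T q \<sigma> A (P q)) \<and>
        T' = (\<lambda>r.
          if \<exists>q. is_leaf T q \<and> prefix p q \<and> strict_prefix q r then
            (let q = (SOME q. is_leaf T q \<and> prefix p q \<and> strict_prefix q r)
             in map_option (\<lambda>(\<tau>, B). (\<tau>, B, Awake)) (patmap (P q) (drop (length q) r)))
          else (case T r of
                  None \<Rightarrow> None
                | Some (\<tau>, B, m) \<Rightarrow>
                    Some (\<tau>, B, if r = p then new_mark A
                                 else if reawake C T p \<sigma> A r then Awake else m))))"

definition init_tab :: "fm \<Rightarrow> tableau" where
  "init_tab A = (\<lambda>r. if r = [] then Some (Root, ENeg (emb A), Awake) else None)"

definition systematic_tableau :: "horn set \<Rightarrow> fm \<Rightarrow> (nat \<Rightarrow> tableau) \<Rightarrow> bool" where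
  "systematic_tableau C A Ts \<longleftrightarrow> Ts 0 = init_tab A \<and> (\<forall>i. sys_step C (Ts i) (Ts (Suc i)))"

definition lim_dom :: "(nat \<Rightarrow> tableau) \<Rightarrow> nat list set" where
  "lim_dom Ts = {r. \<exists>i. Ts i r \<noteq> None}"

definition lim_content :: "(nat \<Rightarrow> tableau) \<Rightarrow> nat list \<Rightarrow> label \<times> efm" where
  "lim_content Ts r = (case the (Ts (LEAST i. Ts i r \<noteq> None) r) of (\<sigma>, A, m) \<Rightarrow> (\<sigma>, A))"

definition is_chain :: "nat list set \<Rightarrow> bool" where
  "is_chain P \<longleftrightarrow> (\<forall>a\<in>P. \<forall>b\<in>P. prefix a b \<or> prefix b a)"

definition lim_branch :: "(nat \<Rightarrow> tableau) \<Rightarrow> nat list set \<Rightarrow> bool" where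
  "lim_branch Ts P \<longleftrightarrow> P \<subseteq> lim_dom Ts \<and> is_chain P \<and>
     (\<forall>Q. Q \<subseteq> lim_dom Ts \<and> is_chain Q \<and> P \<subseteq> Q \<longrightarrow> Q = P)"

definition tab_closes :: "(nat \<Rightarrow> tableau) \<Rightarrow> bool" where
  "tab_closes Ts \<longleftrightarrow> (\<forall>P. lim_branch Ts P \<longrightarrow> closed_set (lim_content Ts ` P))"

end

theory Submission
  imports Defs
begin

section \<open>Tree structure\<close>

definition wf_tab :: "tableau \<Rightarrow> bool" where
  "wf_tab T \<longleftrightarrow> T [] \<noteq> None \<and> (\<forall>r s. T r \<noteq> None \<longrightarrow> prefix s r \<longrightarrow> T s \<noteq> None) \<and>
     (\<forall>r s. T r \<noteq> None \<longrightarrow> strict_prefix s r \<longrightarrow> T (s @ [0]) \<noteq> None)"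

definition stepT :: "horn set \<Rightarrow> tableau \<Rightarrow> nat list \<Rightarrow> label \<Rightarrow> efm \<Rightarrow> (nat list \<Rightarrow> pat) \<Rightarrow> tableau" where
  "stepT C T p \<sigma> A P = (\<lambda>r.
          if \<exists>q. is_leaf T q \<and> prefix p q \<and> strict_prefix q r then
            (let q = (SOME q. is_leaf T q \<and> prefix p q \<and> strict_prefix q r)
             in map_option (\<lambda>(\<tau>, B). (\<tau>, B, Awake)) (patmap (P q) (drop (length q) r)))
          else (case T r of
                  None \<Rightarrow> None
                | Some (\<tau>, B, m) \<Rightarrow>
                    Some (\<tau>, B, if r = p then new_mark A
                                 else if reawake C T p \<sigma> A r then Awake else m)))"

lemma sys_step_cases:
  assumes "sys_step C T T'"
  shows "T' = T \<or> (\<exists>p \<sigma> A P. selected T p \<and> T p = Some (\<sigma>, A, Awake) \<and>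
        (\<forall>q. is_leaf T q \<and> prefix p q \<longrightarrow> rule_pat C T q \<sigma> A (P q)) \<and> T' = stepT C T p \<sigma> A P)"
  using assms unfolding sys_step_def stepT_def by blast

lemma leaf_eq:
  assumes "wf_tab T" "is_leaf T a" "is_leaf T b" "prefix a b"
  shows "a = b"
proof (rule ccontr)
  assume "a \<noteq> b"
  then have "strict_prefix a b" using assms(4) by (simp add: strict_prefix_def)
  moreover have "T b \<noteq> None" using assms(3) by (simp add: is_leaf_def)
  ultimately have "T (a @ [0]) \<noteq> None" using assms(1) unfolding wf_tab_def by blast
  then show False using assms(2) by (simp add: is_leaf_def)
qed

lemma old_not_below_leaf:
  assumes "wf_tab T" "T r \<noteq> None" "is_leaf T q"
  shows "\<not> strict_prefix q r"
  using assms unfolding wf_tab_def is_leaf_def by blast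

lemma stepT_else:
  assumes "\<not> (\<exists>q. is_leaf T q \<and> prefix p q \<and> strict_prefix q r)"
  shows "stepT C T p \<sigma> A P r = (case T r of
                  None \<Rightarrow> None
                | Some (\<tau>, B, m) \<Rightarrow>
                    Some (\<tau>, B, if r = p then new_mark A
                                 else if reawake C T p \<sigma> A r then Awake else m))"
  unfolding stepT_def by (simp only: if_not_P[OF assms])

lemma stepT_old:
  assumes "wf_tab T" "T r = Some (\<tau>, B, m)"
  shows "\<exists>m'. stepT C T p \<sigma> A P r = Some (\<tau>, B, m')"
proof -
  have "\<not> (\<exists>q. is_leaf T q \<and> prefix p q \<and> strict_prefix q r)"
    using old_not_below_leaf[OF assms(1)] assms(2) by blast
  from stepT_else[OF this] show ?thesis using assms(2) by simp
qed

lemma stepT_old_ne: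
  assumes "wf_tab T" "T r \<noteq> None"
  shows "stepT C T p \<sigma> A P r \<noteq> None"
  using stepT_old[OF assms(1)] assms(2) by fastforce

lemma stepT_new:
  assumes "wf_tab T" "is_leaf T q" "prefix p q" "d \<noteq> []"
  shows "stepT C T p \<sigma> A P (q @ d) = map_option (\<lambda>(\<tau>, B). (\<tau>, B, Awake)) (patmap (P q) d)"
proof -
  have sp: "strict_prefix q (q @ d)" using assms(4) by (simp add: strict_prefix_def)
  have ex: "\<exists>q'. is_leaf T q' \<and> prefix p q' \<and> strict_prefix q' (q @ d)"
    using assms sp by blast
  define q0 where "q0 = (SOME q'. is_leaf T q' \<and> prefix p q' \<and> strict_prefix q' (q @ d))"
  have q0: "is_leaf T q0 \<and> prefix p q0 \<and> strict_prefix q0 (q @ d)"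
    unfolding q0_def by (rule someI_ex[OF ex])
  have "prefix q0 q \<or> prefix q q0"
    using q0 sp prefix_same_cases by (metis strict_prefix_def)
  then have "q0 = q" using leaf_eq[OF assms(1)] q0 assms(2) by metis
  then show ?thesis unfolding stepT_def using ex q0_def by (simp add: Let_def)
qed

lemma stepT_cases:
  assumes "stepT C T p \<sigma> A P r \<noteq> None"
  shows "T r \<noteq> None \<or> (\<exists>q d. is_leaf T q \<and> prefix p q \<and> d \<noteq> [] \<and> r = q @ d \<and> patmap (P q) d \<noteq> None)"
proof (cases "\<exists>q. is_leaf T q \<and> prefix p q \<and> strict_prefix q r")
  case True
  define q0 where "q0 = (SOME q'. is_leaf T q' \<and> prefix p q' \<and> strict_prefix q' r)"
  have q0: "is_leaf T q0 \<and> prefix p q0 \<and> strict_prefix q0 r"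
    unfolding q0_def by (rule someI_ex[OF True])
  then obtain d where d: "r = q0 @ d" "d \<noteq> []"
    by (metis append_Nil2 prefixE strict_prefix_def)
  have "patmap (P q0) d \<noteq> None"
    using assms True d unfolding stepT_def q0_def[symmetric] by (simp add: Let_def)
  then show ?thesis using q0 d by blast
next
  case False
  from stepT_else[OF this] assms show ?thesis by (auto split: option.splits)
qed


lemma patmap_prefix:
  assumes "patmap Pt d \<noteq> None" "prefix d' d" "d' \<noteq> []"
  shows "patmap Pt d' \<noteq> None"
proof -
  have "set d' \<subseteq> set d" "length d' \<le> length d"
    using assms(2) set_mono_prefix prefix_length_le by auto
  then show ?thesis using assms(1,3) by (cases Pt) (auto split: if_splits)
qed

lemma patmap_snoc0:
  assumes "patmap Pt d \<noteq> None" "strict_prefix d' d"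
  shows "patmap Pt (d' @ [0]) \<noteq> None"
proof -
  have "length d' < length d" using assms(2) by (rule prefix_length_less)
  moreover have "set d' \<subseteq> set d" using assms(2) set_mono_prefix by (auto simp: strict_prefix_def)
  moreover have "d \<noteq> []" using calculation by auto
  ultimately show ?thesis using assms(1) by (cases Pt) (auto split: if_splits)
qed

lemma wf_stepT:
  assumes "wf_tab T"
  shows "wf_tab (stepT C T p \<sigma> A P)" (is "wf_tab ?T")
proof -
  have w: "T [] \<noteq> None" "\<And>r s. T r \<noteq> None \<Longrightarrow> prefix s r \<Longrightarrow> T s \<noteq> None"
     "\<And>r s. T r \<noteq> None \<Longrightarrow> strict_prefix s r \<Longrightarrow> T (s @ [0]) \<noteq> None"
    using assms unfolding wf_tab_def by blast+
  have old: "\<And>r. T r \<noteq> None \<Longrightarrow> ?T r \<noteq> None" using stepT_old_ne[OF assms] by blast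
  have new: "\<And>q d. is_leaf T q \<Longrightarrow> prefix p q \<Longrightarrow> d \<noteq> [] \<Longrightarrow> patmap (P q) d \<noteq> None \<Longrightarrow> ?T (q @ d) \<noteq> None"
    using stepT_new[OF assms] by simp
  have 1: "?T s \<noteq> None" if "?T r \<noteq> None" "prefix s r" for r s
  proof -
    from stepT_cases[OF that(1)] show ?thesis
    proof
      assume "T r \<noteq> None" then show ?thesis using w(2) old that(2) by blast
    next
      assume "\<exists>q d. is_leaf T q \<and> prefix p q \<and> d \<noteq> [] \<and> r = q @ d \<and> patmap (P q) d \<noteq> None"
      then obtain q d where q: "is_leaf T q" "prefix p q" "d \<noteq> []" "r = q @ d" "patmap (P q) d \<noteq> None" by blast
      from that(2) q(4) have "prefix s q \<or> (\<exists>us. s = q @ us \<and> prefix us d)" by (simp add: prefix_append)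
      then show ?thesis
      proof
        assume "prefix s q"
        moreover have "T q \<noteq> None" using q(1) by (simp add: is_leaf_def)
        ultimately have "T s \<noteq> None" using w(2) by blast
        then show ?thesis using old by blast
      next
        assume "\<exists>us. s = q @ us \<and> prefix us d"
        then obtain us where us: "s = q @ us" "prefix us d" by blast
        show ?thesis
        proof (cases "us = []")
          case True
          have "T q \<noteq> None" using q(1) by (simp add: is_leaf_def)
          then show ?thesis using us True old by simp
        next
          case False then show ?thesis using us q new patmap_prefix by blast
        qed
      qed
    qed
  qed
  have 2: "?T (s @ [0]) \<noteq> None" if "?T r \<noteq> None" "strict_prefix s r" for r s
  proof -
    from stepT_cases[OF that(1)] show ?thesis
    proof
      assume "T r \<noteq> None" then show ?thesis using w(3) old that(2) by blast
    next
      assume "\<exists>q d. is_leaf T q \<and> prefix p q \<and> d \<noteq> [] \<and> r = q @ d \<and> patmap (P q) d \<noteq> None"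
      then obtain q d where q: "is_leaf T q" "prefix p q" "d \<noteq> []" "r = q @ d" "patmap (P q) d \<noteq> None" by blast
      from that(2) q(4) have "prefix s q \<or> (\<exists>us. s = q @ us \<and> prefix us d)"
        by (simp add: prefix_append strict_prefix_def)
      then show ?thesis
      proof
        assume a: "prefix s q"
        show ?thesis
        proof (cases "s = q")
          case True
          have "strict_prefix [] d" using q(3) by (simp add: strict_prefix_def)
          from patmap_snoc0[OF q(5) this] have "patmap (P q) ([] @ [0]) \<noteq> None" .
          then show ?thesis using new[OF q(1,2)] True by simp
        next
          case False
          then have "strict_prefix s q" using a by (simp add: strict_prefix_def)
          moreover have "T q \<noteq> None" using q(1) by (simp add: is_leaf_def)
          ultimately have "T (s @ [0]) \<noteq> None" using w(3) by blast
          then show ?thesis using old by blast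
        qed
      next
        assume "\<exists>us. s = q @ us \<and> prefix us d"
        then obtain us where us: "s = q @ us" "prefix us d" by blast
        have "us \<noteq> d" using us that(2) q(4) by (auto simp: strict_prefix_def)
        then have "strict_prefix us d" using us by (simp add: strict_prefix_def)
        then have "patmap (P q) (us @ [0]) \<noteq> None" using patmap_snoc0 q(5) by blast
        then show ?thesis using new[OF q(1,2)] us by simp
      qed
    qed
  qed
  show ?thesis unfolding wf_tab_def using old w(1) 1 2 by blast
qed

lemma leaf_stays:
  assumes "wf_tab T" "is_leaf T q" "\<not> prefix p q"
  shows "is_leaf (stepT C T p \<sigma> A P) q"
proof -
  have "stepT C T p \<sigma> A P q \<noteq> None" using stepT_old_ne[OF assms(1)] assms(2) by (simp add: is_leaf_def)
  moreover have "stepT C T p \<sigma> A P (q @ [0]) = None"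
  proof (rule ccontr)
    assume "stepT C T p \<sigma> A P (q @ [0]) \<noteq> None"
    from stepT_cases[OF this] show False
    proof
      assume "T (q @ [0]) \<noteq> None" then show False using assms(2) by (simp add: is_leaf_def)
    next
      assume "\<exists>q' d. is_leaf T q' \<and> prefix p q' \<and> d \<noteq> [] \<and> q @ [0] = q' @ d \<and> patmap (P q') d \<noteq> None"
      then obtain q' d where q': "is_leaf T q'" "prefix p q'" "d \<noteq> []" "q @ [0] = q' @ d" by blast
      then have "prefix q' q"
        by (metis prefixI prefix_snoc same_prefix_nil)
      then have "q' = q" using leaf_eq[OF assms(1) q'(1) assms(2)] by simp
      then show False using q'(2) assms(3) by simp
    qed
  qed
  ultimately show ?thesis by (simp add: is_leaf_def)
qed

lemma branch_old:
  assumes "wf_tab T" "T q \<noteq> None"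
  shows "branch_fms (stepT C T p \<sigma> A P) q = branch_fms T q"
proof -
  have pre: "\<And>s. prefix s q \<Longrightarrow> T s \<noteq> None" using assms unfolding wf_tab_def by blast
  show ?thesis
  proof (rule set_eqI, rule iffI)
    fix x assume "x \<in> branch_fms (stepT C T p \<sigma> A P) q"
    then obtain \<tau> B s m where x: "x = (\<tau>, B)" "prefix s q" "stepT C T p \<sigma> A P s = Some (\<tau>, B, m)"
      unfolding branch_fms_def by blast
    obtain \<tau>' B' m' where t: "T s = Some (\<tau>', B', m')" using pre[OF x(2)] by auto
    from stepT_old[OF assms(1) t, of C p \<sigma> A P] x have "\<tau>' = \<tau> \<and> B' = B" by auto
    with t x show "x \<in> branch_fms T q"
      unfolding branch_fms_def by auto
  next
    fix x assume "x \<in> branch_fms T q"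
    then obtain \<tau> B s m where x: "x = (\<tau>, B)" "prefix s q" "T s = Some (\<tau>, B, m)"
      unfolding branch_fms_def by blast
    with stepT_old[OF assms(1) x(3)] show "x \<in> branch_fms (stepT C T p \<sigma> A P) q"
      unfolding branch_fms_def by auto
  qed
qed

definition addset :: "pat \<Rightarrow> nat list \<Rightarrow> (label \<times> efm) set" where
  "addset Pt d = {x. \<exists>d'. prefix d' d \<and> d' \<noteq> [] \<and> patmap Pt d' = Some x}"

lemma branch_new:
  assumes "wf_tab T" "is_leaf T q" "prefix p q"
  shows "branch_fms (stepT C T p \<sigma> A P) (q @ d) = branch_fms T q \<union> addset (P q) d"
proof -
  have bo: "branch_fms (stepT C T p \<sigma> A P) q = branch_fms T q"
    using branch_old[OF assms(1)] assms(2) by (simp add: is_leaf_def)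
  show ?thesis
  proof (rule set_eqI, rule iffI)
    fix x assume "x \<in> branch_fms (stepT C T p \<sigma> A P) (q @ d)"
    then obtain \<tau> B s m where x: "x = (\<tau>, B)" "prefix s (q @ d)" "stepT C T p \<sigma> A P s = Some (\<tau>, B, m)"
      unfolding branch_fms_def by blast
    from x(2) have "prefix s q \<or> (\<exists>us. s = q @ us \<and> prefix us d)" by (simp add: prefix_append)
    then show "x \<in> branch_fms T q \<union> addset (P q) d"
    proof
      assume "prefix s q"
      then have "x \<in> branch_fms (stepT C T p \<sigma> A P) q" using x unfolding branch_fms_def by blast
      then show ?thesis using bo by simp
    next
      assume "\<exists>us. s = q @ us \<and> prefix us d"
      then obtain us where us: "s = q @ us" "prefix us d" by blast
      show ?thesis
      proof (cases "us = []")
        case True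
        then have "x \<in> branch_fms (stepT C T p \<sigma> A P) q" using x us unfolding branch_fms_def by auto
        then show ?thesis using bo by simp
      next
        case False
        then have "patmap (P q) us = Some x" using stepT_new[OF assms, of us C \<sigma> A P] x us by auto
        then show ?thesis using us False unfolding addset_def by blast
      qed
    qed
  next
    fix x assume "x \<in> branch_fms T q \<union> addset (P q) d"
    then show "x \<in> branch_fms (stepT C T p \<sigma> A P) (q @ d)"
    proof
      assume "x \<in> branch_fms T q"
      then have "x \<in> branch_fms (stepT C T p \<sigma> A P) q" using bo by simp
      then obtain s m where sm: "prefix s q" "stepT C T p \<sigma> A P s = Some (fst x, snd x, m)"
        unfolding branch_fms_def by auto
      have "prefix s (q @ d)" using sm(1) by simp
      then have "(fst x, snd x) \<in> branch_fms (stepT C T p \<sigma> A P) (q @ d)"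
        using sm(2) unfolding branch_fms_def by blast
      then show ?thesis by simp
    next
      assume "x \<in> addset (P q) d"
      then obtain us where us: "prefix us d" "us \<noteq> []" "patmap (P q) us = Some x" unfolding addset_def by blast
      then have "stepT C T p \<sigma> A P (q @ us) = Some (fst x, snd x, Awake)"
        using stepT_new[OF assms us(2)] by (cases x) simp
      moreover have "prefix (q @ us) (q @ d)" using us(1) by simp
      ultimately have "(fst x, snd x) \<in> branch_fms (stepT C T p \<sigma> A P) (q @ d)"
        unfolding branch_fms_def by blast
      then show ?thesis by simp
    qed
  qed
qed

lemma leaf_new:
  assumes "wf_tab T" "is_leaf T q" "prefix p q"
    "d = [] \<or> patmap (P q) d \<noteq> None" "patmap (P q) (d @ [0]) = None"
  shows "is_leaf (stepT C T p \<sigma> A P) (q @ d)"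
proof -
  have "stepT C T p \<sigma> A P (q @ d) \<noteq> None"
  proof (cases "d = []")
    case True then show ?thesis using stepT_old_ne[OF assms(1)] assms(2) by (simp add: is_leaf_def)
  next
    case False then show ?thesis using assms(4) stepT_new[OF assms(1-3) False] by auto
  qed
  moreover have "stepT C T p \<sigma> A P (q @ d @ [0]) = None"
    using stepT_new[OF assms(1-3), of "d @ [0]"] assms(5) by simp
  ultimately show ?thesis by (simp add: is_leaf_def)
qed


lemma prefix_replicate:
  assumes "prefix d' (replicate n a)"
  shows "d' = replicate (length d') a \<and> length d' \<le> n"
proof -
  from assms obtain t where t: "replicate n a = d' @ t" by (auto simp: prefix_def)
  then have "d' = take (length d') (replicate n a)" by simp
  then show ?thesis using t by (metis length_append le_add1 length_replicate take_replicate min.absorb1)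
qed

lemma chain_pat:
  "replicate (length xs) 0 = [] \<or> patmap (Chain xs) (replicate (length xs) 0) \<noteq> None"
  "patmap (Chain xs) (replicate (length xs) 0 @ [0]) = None"
  "addset (Chain xs) (replicate (length xs) 0) = set xs"
proof -
  show "replicate (length xs) 0 = [] \<or> patmap (Chain xs) (replicate (length xs) 0) \<noteq> None" by auto
  show "patmap (Chain xs) (replicate (length xs) 0 @ [0]) = None" by simp
  show "addset (Chain xs) (replicate (length xs) 0) = set xs"
  proof (rule set_eqI, rule iffI)
    fix x assume "x \<in> addset (Chain xs) (replicate (length xs) 0)"
    then obtain d' where d': "prefix d' (replicate (length xs) 0)" "d' \<noteq> []" "patmap (Chain xs) d' = Some x"
      unfolding addset_def by blast
    from prefix_replicate[OF d'(1)] have "length d' \<le> length xs" by simp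
    moreover have "length d' - 1 < length xs" using calculation d'(2) by (cases d') auto
    moreover have "x = xs ! (length d' - 1)" using d' calculation by (auto split: if_splits)
    ultimately show "x \<in> set xs" by simp
  next
    fix x assume "x \<in> set xs"
    then obtain i where i: "i < length xs" "x = xs ! i" by (auto simp: in_set_conv_nth)
    have "prefix (replicate (Suc i) (0::nat)) (replicate (length xs) 0)"
      using i(1) by (metis Suc_leI le_add_diff_inverse prefixI replicate_add)
    moreover have "patmap (Chain xs) (replicate (Suc i) 0) = Some x"
    proof -
      have "set (replicate (Suc i) (0::nat)) \<subseteq> {0}" by (induct i) auto
      moreover have "replicate (Suc i) (0::nat) \<noteq> []" by (simp del: replicate_Suc)
      moreover have "length (replicate (Suc i) (0::nat)) \<le> length xs" using i(1) by (simp del: replicate_Suc)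
      ultimately show ?thesis using i(2) by (simp del: replicate_Suc)
    qed
    moreover have "replicate (Suc i) (0::nat) \<noteq> []" by (simp del: replicate_Suc)
    ultimately show "x \<in> addset (Chain xs) (replicate (length xs) 0)"
      unfolding addset_def by blast
  qed
qed

lemma splits_pat:
  assumes "length bs = length ps" "set bs \<subseteq> {0, 1}"
  shows "bs = [] \<or> patmap (Splits ps) bs \<noteq> None"
    "patmap (Splits ps) (bs @ [0]) = None"
    "x \<in> addset (Splits ps) bs \<Longrightarrow> \<exists>i<length ps. x = (if bs ! i = 0 then fst (ps ! i) else snd (ps ! i))"
proof -
  show "bs = [] \<or> patmap (Splits ps) bs \<noteq> None" using assms by auto
  show "patmap (Splits ps) (bs @ [0]) = None" using assms by simp
  assume "x \<in> addset (Splits ps) bs"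
  then obtain d' where d': "prefix d' bs" "d' \<noteq> []" "patmap (Splits ps) d' = Some x"
    unfolding addset_def by blast
  have l: "length d' \<le> length bs" using d'(1) prefix_length_le by blast
  have dt: "d' = take (length d') bs" using d'(1) by (auto simp: prefix_def)
  have tn: "take (length d') bs \<noteq> []" using d'(2) l by (cases bs) auto
  have "last d' = bs ! (length d' - 1)"
  proof -
    have "last (take (length d') bs) = take (length d') bs ! (length (take (length d') bs) - 1)"
      using tn by (rule last_conv_nth)
    also have "\<dots> = bs ! (length d' - 1)" using l d'(2) by (cases d') auto
    finally show ?thesis using dt by simp
  qed
  moreover have lp: "length d' - 1 < length ps" using l d'(2) assms(1) by (cases d') auto
  ultimately show "\<exists>i<length ps. x = (if bs ! i = 0 then fst (ps ! i) else snd (ps ! i))"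
    using d' l assms(1) by (intro exI[of _ "length d' - 1"]) (auto split: if_splits)
qed

section \<open>Semantics of extended formulas\<close>

fun ef :: "('w \<Rightarrow> 'w \<Rightarrow> bool) \<Rightarrow> ('w \<Rightarrow> 'w \<Rightarrow> 'w \<Rightarrow> bool) \<Rightarrow> (nat \<Rightarrow> 'w \<Rightarrow> bool)
            \<Rightarrow> (label \<Rightarrow> 'w) \<Rightarrow> 'w \<Rightarrow> efm \<Rightarrow> bool" where
  "ef R S V f x (EVar p) = V p x"
| "ef R S V f x (ENeg A) = (\<not> ef R S V f x A)"
| "ef R S V f x (EImp A B) = (ef R S V f x A \<longrightarrow> ef R S V f x B)"
| "ef R S V f x (EBox A) = (\<forall>y. R x y \<longrightarrow> ef R S V f y A)"
| "ef R S V f x (ERhd A B) = (\<forall>y. R x y \<longrightarrow> ef R S V f y A \<longrightarrow> (\<exists>z. S x y z \<and> ef R S V f z B))"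
| "ef R S V f x (EBoxL \<rho> A) = (\<forall>z. S (f \<rho>) x z \<longrightarrow> ef R S V f z A)"

fun el :: "efm \<Rightarrow> label set" where
  "el (EVar p) = {}"
| "el (ENeg A) = el A"
| "el (EImp A B) = el A \<union> el B"
| "el (EBox A) = el A"
| "el (ERhd A B) = el A \<union> el B"
| "el (EBoxL \<rho> A) = insert \<rho> (el A)"

lemma ef_emb: "ef R S V f x (emb A) = forces R S V x A"
  by (induction A arbitrary: x) auto

lemma el_emb: "el (emb A) = {}"
  by (induction A) auto

lemma ef_agree: "(\<forall>\<rho>\<in>el A. f \<rho> = g \<rho>) \<Longrightarrow> ef R S V f x A = ef R S V g x A"
  by (induction A arbitrary: x) auto

definition struct :: "'w set \<Rightarrow> ('w \<Rightarrow> 'w \<Rightarrow> bool) \<Rightarrow> ('w \<Rightarrow> 'w \<Rightarrow> 'w \<Rightarrow> bool)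
                       \<Rightarrow> label set \<Rightarrow> (label \<Rightarrow> 'w) \<Rightarrow> bool" where
  "struct W R S L f \<longleftrightarrow> (\<forall>\<tau>\<in>L. f \<tau> \<in> W) \<and>
     (\<forall>\<sigma> n. LR \<sigma> n \<in> L \<longrightarrow> \<sigma> \<in> L \<and> R (f \<sigma>) (f (LR \<sigma> n))) \<and>
     (\<forall>\<sigma> \<rho> n. LS \<sigma> \<rho> n \<in> L \<longrightarrow> \<sigma> \<in> L \<and> \<rho> \<in> L \<and> S (f \<rho>) (f \<sigma>) (f (LS \<sigma> \<rho> n)))"

lemma struct_W: "struct W R S L f \<Longrightarrow> \<tau> \<in> L \<Longrightarrow> f \<tau> \<in> W"
  unfolding struct_def by blast
lemma struct_LR: "struct W R S L f \<Longrightarrow> LR \<sigma> n \<in> L \<Longrightarrow> \<sigma> \<in> L \<and> R (f \<sigma>) (f (LR \<sigma> n))"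
  unfolding struct_def by blast
lemma struct_LS: "struct W R S L f \<Longrightarrow> LS \<sigma> \<rho> n \<in> L \<Longrightarrow> \<sigma> \<in> L \<and> \<rho> \<in> L \<and> S (f \<rho>) (f \<sigma>) (f (LS \<sigma> \<rho> n))"
  unfolding struct_def by blast

fun mh :: "('w \<Rightarrow> 'w \<Rightarrow> bool) \<Rightarrow> ('w \<Rightarrow> 'w \<Rightarrow> 'w \<Rightarrow> bool) \<Rightarrow> (label \<Rightarrow> 'w) \<Rightarrow> ratom \<Rightarrow> bool" where
  "mh R S f (RA a b) = R (f a) (f b)"
| "mh R S f (SA a b c) = S (f a) (f b) (f c)"

lemma hholds_hinst: "hholds R S (f \<circ> v) a = mh R S f (hinst v a)"
  by (cases a) auto

lemma frame_facts:
  assumes fr: "IL_frame W R S"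
  shows "\<And>x y z. R x y \<Longrightarrow> R y z \<Longrightarrow> R x z"
     "\<And>x y z. S x y z \<Longrightarrow> R x y" "\<And>x y z. S x y z \<Longrightarrow> R x z"
     "\<And>x y. R x y \<Longrightarrow> S x y y"
     "\<And>x y z u. S x y z \<Longrightarrow> S x z u \<Longrightarrow> S x y u"
     "\<And>x y z. R x y \<Longrightarrow> R y z \<Longrightarrow> S x y z"
     "\<And>x y. R x y \<Longrightarrow> y \<in> W"
  using fr unfolding IL_frame_def by (elim conjE; metis)+

lemma lrel_sound:
  assumes fr: "IL_frame W R S" and hs: "horn_sat C W R S" and st: "struct W R S L f"
  shows "lrel L C a \<Longrightarrow> mh R S f a"
proof (induction rule: lrel.induct)
  note F = frame_facts[OF fr]
  {
  case (c1 \<sigma> n)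
  have "R (f \<sigma>) (f (LR \<sigma> n))" using st c1(2) unfolding struct_def by blast
  then show ?case by simp
next
  case (c2 a b c) then show ?case using F(1)[of "f a" "f b" "f c"] by simp
next
  case (c3 \<sigma> \<rho> n)
  have "S (f \<rho>) (f \<sigma>) (f (LS \<sigma> \<rho> n))" using st c3(3) unfolding struct_def by blast
  then show ?case by simp
next
  case (c4 \<sigma> \<tau>) then show ?case using F(4)[of "f \<sigma>" "f \<tau>"] by simp
next
  case (c5 \<rho> \<sigma> \<tau>) then show ?case using F(6)[of "f \<rho>" "f \<sigma>" "f \<tau>"] by simp
next
  case (c6 \<rho> \<sigma> \<tau> \<upsilon>) then show ?case using F(5)[of "f \<rho>" "f \<sigma>" "f \<tau>" "f \<upsilon>"] by simp
next
  case (c7a \<rho> \<sigma> \<tau>) then show ?case using F(2)[of "f \<rho>" "f \<sigma>" "f \<tau>"] by simp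
next
  case (c7b \<rho> \<sigma> \<tau>) then show ?case using F(3)[of "f \<rho>" "f \<sigma>" "f \<tau>"] by simp
next
  case (c8 h v)
  have W: "\<forall>i. (f \<circ> v) i \<in> W" using c8(2) st unfolding struct_def comp_def by blast
  have "\<forall>a\<in>set (fst h). mh R S f (hinst v a)" using c8(3) by blast
  then have "\<forall>a\<in>set (fst h). hholds R S (f \<circ> v) a" by (simp add: hholds_hinst)
  then have "hholds R S (f \<circ> v) (snd h)" using hs c8(1) W unfolding horn_sat_def by blast
  then show ?case by (simp add: hholds_hinst)
  }
qed

lemma noeth_min:
  assumes "IL_frame W R S" "y \<in> U"
  shows "\<exists>y'\<in>U. \<forall>z. R y' z \<longrightarrow> z \<notin> U"
proof -
  have nc: "\<not> (\<exists>f :: nat \<Rightarrow> _. \<forall>i. R (f i) (f (Suc i)))"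
    using assms(1) unfolding IL_frame_def by blast
  have "wf {(b, a). R a b}"
    unfolding wf_iff_no_infinite_down_chain using nc by simp
  then obtain z where "z \<in> U" "\<And>y. (y, z) \<in> {(b, a). R a b} \<Longrightarrow> y \<notin> U"
    using wfE_min[OF _ assms(2)] by metis
  then show ?thesis by blast
qed

section \<open>Faithful sets of labelled formulas\<close>

definition fsat :: "'w set \<Rightarrow> ('w \<Rightarrow> 'w \<Rightarrow> bool) \<Rightarrow> ('w \<Rightarrow> 'w \<Rightarrow> 'w \<Rightarrow> bool) \<Rightarrow> (nat \<Rightarrow> 'w \<Rightarrow> bool)
   \<Rightarrow> (label \<times> efm) set \<Rightarrow> (label \<Rightarrow> 'w) \<Rightarrow> bool" where
  "fsat W R S V F f \<longleftrightarrow> struct W R S (fst ` F) f \<and>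
     (\<forall>\<tau> B. (\<tau>, B) \<in> F \<longrightarrow> ef R S V f (f \<tau>) B \<and> el B \<subseteq> fst ` F)"

definition good :: "('w \<Rightarrow> 'w \<Rightarrow> bool) \<Rightarrow> ('w \<Rightarrow> 'w \<Rightarrow> 'w \<Rightarrow> bool) \<Rightarrow> (nat \<Rightarrow> 'w \<Rightarrow> bool)
   \<Rightarrow> (label \<times> efm) set \<Rightarrow> (label \<Rightarrow> 'w) \<Rightarrow> label \<times> efm \<Rightarrow> bool" where
  "good R S V F f x \<longleftrightarrow> fst x \<in> fst ` F \<and> el (snd x) \<subseteq> fst ` F \<and> ef R S V f (f (fst x)) (snd x)"

lemma fsat_mem:
  assumes "fsat W R S V F f" "(\<sigma>, A) \<in> F"
  shows "ef R S V f (f \<sigma>) A" "el A \<subseteq> fst ` F" "\<sigma> \<in> fst ` F"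
  using assms unfolding fsat_def by (auto intro: rev_image_eqI)

lemma fsat_not_closed:
  assumes "fsat W R S V F f"
  shows "\<not> closed_set F"
proof
  assume "closed_set F"
  then obtain \<sigma> A where a: "(\<sigma>, A) \<in> F" "(\<sigma>, ENeg A) \<in> F" unfolding closed_set_def by blast
  have "ef R S V f (f \<sigma>) A" using fsat_mem(1)[OF assms a(1)] .
  moreover have "ef R S V f (f \<sigma>) (ENeg A)" using fsat_mem(1)[OF assms a(2)] .
  ultimately show False by simp
qed

lemma fsat_ext_old:
  assumes "fsat W R S V F f" "\<forall>x\<in>G. good R S V F f x"
  shows "fsat W R S V (F \<union> G) f"
proof -
  have L: "fst ` (F \<union> G) = fst ` F" using assms(2) unfolding good_def by auto
  have "ef R S V f (f \<tau>) B \<and> el B \<subseteq> fst ` F" if "(\<tau>, B) \<in> F \<union> G" for \<tau> B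
  proof (cases "(\<tau>, B) \<in> F")
    case True then show ?thesis using fsat_mem[OF assms(1)] by blast
  next
    case False then have "(\<tau>, B) \<in> G" using that by blast
    then have "good R S V F f (\<tau>, B)" using assms(2) by blast
    then show ?thesis unfolding good_def by simp
  qed
  then show ?thesis using assms(1) unfolding fsat_def L by blast
qed

lemma fsat_ext_new:
  assumes fs: "fsat W R S V F f" and nu: "\<nu> \<notin> fst ` F" and w: "w \<in> W"
    and par: "(\<exists>\<sigma> n. \<nu> = LR \<sigma> n \<and> \<sigma> \<in> fst ` F \<and> R (f \<sigma>) w) \<or>
              (\<exists>\<sigma> \<rho> n. \<nu> = LS \<sigma> \<rho> n \<and> \<sigma> \<in> fst ` F \<and> \<rho> \<in> fst ` F \<and> S (f \<rho>) (f \<sigma>) w)"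
    and G: "\<forall>x\<in>G. fst x = \<nu> \<and> el (snd x) \<subseteq> fst ` F \<and> ef R S V f w (snd x)"
  shows "fsat W R S V (F \<union> G) (f(\<nu> := w))"
proof -
  let ?L = "fst ` F" and ?L' = "fst ` (F \<union> G)" and ?f = "f(\<nu> := w)"
  have sub: "?L \<subseteq> ?L'" "?L' \<subseteq> insert \<nu> ?L" using G by auto
  have st: "struct W R S ?L f" using fs unfolding fsat_def by blast
  have agree: "\<And>\<tau>. \<tau> \<in> ?L \<Longrightarrow> ?f \<tau> = f \<tau>" using nu by auto
  have s1: "\<forall>\<tau>\<in>?L'. ?f \<tau> \<in> W"
  proof
    fix \<tau> assume "\<tau> \<in> ?L'"
    show "?f \<tau> \<in> W"
    proof (cases "\<tau> = \<nu>")
      case True then show ?thesis using w by simp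
    next
      case False
      then have "\<tau> \<in> ?L" using \<open>\<tau> \<in> ?L'\<close> sub by blast
      then show ?thesis using struct_W[OF st] agree by metis
    qed
  qed
  have s2: "\<forall>\<sigma> n. LR \<sigma> n \<in> ?L' \<longrightarrow> \<sigma> \<in> ?L' \<and> R (?f \<sigma>) (?f (LR \<sigma> n))"
  proof (intro allI impI)
    fix \<sigma> n assume a: "LR \<sigma> n \<in> ?L'"
    show "\<sigma> \<in> ?L' \<and> R (?f \<sigma>) (?f (LR \<sigma> n))"
    proof (cases "LR \<sigma> n = \<nu>")
      case True
      then have "\<sigma> \<in> ?L \<and> R (f \<sigma>) w" using par by auto
      then show ?thesis using True agree sub by auto
    next
      case False
      then have "LR \<sigma> n \<in> ?L" using a sub by auto
      then have "\<sigma> \<in> ?L \<and> R (f \<sigma>) (f (LR \<sigma> n))" using struct_LR[OF st] by blast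
      then show ?thesis using agree sub \<open>LR \<sigma> n \<in> ?L\<close> by auto
    qed
  qed
  have s3: "\<forall>\<sigma> \<rho> n. LS \<sigma> \<rho> n \<in> ?L' \<longrightarrow> \<sigma> \<in> ?L' \<and> \<rho> \<in> ?L' \<and> S (?f \<rho>) (?f \<sigma>) (?f (LS \<sigma> \<rho> n))"
  proof (intro allI impI)
    fix \<sigma> \<rho> n assume a: "LS \<sigma> \<rho> n \<in> ?L'"
    show "\<sigma> \<in> ?L' \<and> \<rho> \<in> ?L' \<and> S (?f \<rho>) (?f \<sigma>) (?f (LS \<sigma> \<rho> n))"
    proof (cases "LS \<sigma> \<rho> n = \<nu>")
      case True
      then have "\<sigma> \<in> ?L \<and> \<rho> \<in> ?L \<and> S (f \<rho>) (f \<sigma>) w" using par by auto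
      then show ?thesis using True agree sub by auto
    next
      case False
      then have "LS \<sigma> \<rho> n \<in> ?L" using a sub by auto
      then have "\<sigma> \<in> ?L \<and> \<rho> \<in> ?L \<and> S (f \<rho>) (f \<sigma>) (f (LS \<sigma> \<rho> n))" using struct_LS[OF st] by blast
      then show ?thesis using agree sub \<open>LS \<sigma> \<rho> n \<in> ?L\<close> by auto
    qed
  qed
  have fm: "ef R S V ?f (?f \<tau>) B \<and> el B \<subseteq> ?L'" if "(\<tau>, B) \<in> F \<union> G" for \<tau> B
  proof (cases "(\<tau>, B) \<in> F")
    case True
    have e: "ef R S V f (f \<tau>) B" "el B \<subseteq> ?L" "\<tau> \<in> ?L" using fsat_mem[OF fs True] by auto
    have "ef R S V ?f (?f \<tau>) B = ef R S V f (?f \<tau>) B"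
      by (rule ef_agree) (use e(2) agree in blast)
    then show ?thesis using e agree sub by auto
  next
    case False
    then have "(\<tau>, B) \<in> G" using that by blast
    from G[rule_format, OF this] have g: "\<tau> = \<nu>" "el B \<subseteq> ?L" "ef R S V f w B" by simp_all
    have "ef R S V ?f w B = ef R S V f w B"
      by (rule ef_agree) (use g(2) agree in blast)
    then show ?thesis using g sub by auto
  qed
  show ?thesis unfolding fsat_def struct_def using s1 s2 s3 fm by blast
qed

lemma chain_ok:
  assumes "fsat W R S V (F \<union> set xs) f'"
  shows "\<exists>d f'. (d = [] \<or> patmap (Chain xs) d \<noteq> None) \<and> patmap (Chain xs) (d @ [0]) = None \<and>
            fsat W R S V (F \<union> addset (Chain xs) d) f'"
  apply (rule exI[of _ "replicate (length xs) 0"], rule exI[of _ f'])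
  using chain_pat(1,2)[of xs] assms unfolding chain_pat(3) by (intro conjI)

lemma splits_ok:
  assumes fs: "fsat W R S V F f"
    and g: "\<forall>i<length ps. good R S V F f (fst (ps ! i)) \<or> good R S V F f (snd (ps ! i))"
  shows "\<exists>d f'. (d = [] \<or> patmap (Splits ps) d \<noteq> None) \<and> patmap (Splits ps) (d @ [0]) = None \<and>
            fsat W R S V (F \<union> addset (Splits ps) d) f'"
proof -
  define bs where "bs = map (\<lambda>i. if good R S V F f (fst (ps ! i)) then 0 else 1::nat) [0..<length ps]"
  have l: "length bs = length ps" and s: "set bs \<subseteq> {0, 1}" unfolding bs_def by auto
  have "\<forall>x\<in>addset (Splits ps) bs. good R S V F f x"
  proof
    fix x assume "x \<in> addset (Splits ps) bs"
    from splits_pat(3)[OF l s this] obtain i where i: "i < length ps"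
      "x = (if bs ! i = 0 then fst (ps ! i) else snd (ps ! i))" by blast
    then show "good R S V F f x" using g unfolding bs_def by (auto split: if_splits)
  qed
  then have "fsat W R S V (F \<union> addset (Splits ps) bs) f" using fsat_ext_old[OF fs] by blast
  then show ?thesis using splits_pat(1,2)[OF l s] by blast
qed


lemma fresh_LR:
  assumes "finite L"
  shows "LR \<sigma> (LEAST n. LR \<sigma> n \<notin> L) \<notin> L"
proof -
  have "finite (LR \<sigma> -` L)" by (rule finite_vimageI[OF assms]) (simp add: inj_def)
  then obtain n where "n \<notin> LR \<sigma> -` L" using ex_new_if_finite[OF infinite_UNIV_nat] by blast
  then have "LR \<sigma> n \<notin> L" by simp
  then show ?thesis by (rule LeastI)
qed

lemma fresh_LS:
  assumes "finite L"
  shows "LS \<sigma> \<rho> (LEAST n. LS \<sigma> \<rho> n \<notin> L) \<notin> L"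
proof -
  have "finite (LS \<sigma> \<rho> -` L)" by (rule finite_vimageI[OF assms]) (simp add: inj_def)
  then obtain n where "n \<notin> LS \<sigma> \<rho> -` L" using ex_new_if_finite[OF infinite_UNIV_nat] by blast
  then have "LS \<sigma> \<rho> n \<notin> L" by simp
  then show ?thesis by (rule LeastI)
qed

lemma finite_branch: "finite (branch_fms T q)"
proof -
  have "branch_fms T q \<subseteq> (\<lambda>s. (fst (the (T s)), fst (snd (the (T s))))) ` set (prefixes q)"
  proof
    fix x assume "x \<in> branch_fms T q"
    then obtain \<sigma> A p m where x: "x = (\<sigma>, A)" "prefix p q" "T p = Some (\<sigma>, A, m)"
      unfolding branch_fms_def by blast
    then have "x = (\<lambda>s. (fst (the (T s)), fst (snd (the (T s))))) p" by simp
    moreover have "p \<in> set (prefixes q)" using x(2) by simp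
    ultimately show "x \<in> (\<lambda>s. (fst (the (T s)), fst (snd (the (T s))))) ` set (prefixes q)" by blast
  qed
  then show ?thesis using finite_subset by blast
qed

context
  fixes W :: "'w set" and R :: "'w \<Rightarrow> 'w \<Rightarrow> bool" and S :: "'w \<Rightarrow> 'w \<Rightarrow> 'w \<Rightarrow> bool"
    and V :: "nat \<Rightarrow> 'w \<Rightarrow> bool" and C :: "horn set"
  assumes fr: "IL_frame W R S" and hs: "horn_sat C W R S"
begin

lemma rule_step:
  assumes fs: "fsat W R S V F f" and FF: "F = branch_fms T q" and mem: "(\<sigma>, A) \<in> F"
    and rp: "rule_pat C T q \<sigma> A Pt"
  shows "\<exists>d f'. (d = [] \<or> patmap Pt d \<noteq> None) \<and> patmap Pt (d @ [0]) = None \<and>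
            fsat W R S V (F \<union> addset Pt d) f'"
proof -
  have ncl: "\<not> closed_set (branch_fms T q)" using fsat_not_closed[OF fs] FF by simp
  have labF: "lab T q = fst ` F" using FF lab_def by simp
  have fin: "finite (fst ` F)" using finite_branch FF by simp
  note e = fsat_mem[OF fs mem]
  have st: "struct W R S (fst ` F) f" using fs unfolding fsat_def by blast
  note lr = lrel_sound[OF fr hs st]
  note F = frame_facts[OF fr]
  have nil: ?thesis if "Pt = Chain []" using chain_ok[of W R S V F "[]" f] fs that by simp
  show ?thesis
  proof (cases A)
    case (EVar p) then show ?thesis using rp nil by simp
  next
    case (EImp B D)
    then have Pt: "Pt = Splits [((\<sigma>, ENeg B), (\<sigma>, D))]" using rp ncl by simp
    have "good R S V F f (\<sigma>, ENeg B) \<or> good R S V F f (\<sigma>, D)" using e EImp unfolding good_def by auto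
    then show ?thesis unfolding Pt by (intro splits_ok[OF fs]) auto
  next
    case (EBox B)
    obtain ts where ts: "set ts = {\<tau> \<in> fst ` F. lrel (fst ` F) C (RA \<sigma> \<tau>)}" "Pt = Chain (map (\<lambda>\<tau>. (\<tau>, B)) ts)"
      using rp ncl labF EBox by (auto simp: enum_of_def)
    have eA: "ef R S V f (f \<sigma>) (EBox B)" using e(1) EBox by simp
    have elB: "el B \<subseteq> fst ` F" using e(2) EBox by simp
    have "\<forall>x\<in>set (map (\<lambda>\<tau>. (\<tau>, B)) ts). good R S V F f x"
    proof
      fix x assume "x \<in> set (map (\<lambda>\<tau>. (\<tau>, B)) ts)"
      then obtain \<tau> where x0: "x = (\<tau>, B)" "\<tau> \<in> set ts" by auto
      then have x: "\<tau> \<in> fst ` F" "lrel (fst ` F) C (RA \<sigma> \<tau>)" using ts(1) by blast+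
      have "R (f \<sigma>) (f \<tau>)" using lr[OF x(2)] by simp
      then have "ef R S V f (f \<tau>) B" using eA by simp
      then show "good R S V F f x" unfolding good_def x0(1) using x(1) elB by simp
    qed
    then have "fsat W R S V (F \<union> set (map (\<lambda>\<tau>. (\<tau>, B)) ts)) f" by (rule fsat_ext_old[OF fs])
    from chain_ok[OF this] show ?thesis unfolding ts(2) .
  next
    case (ERhd B D)
    obtain ts where ts: "set ts = {\<tau> \<in> fst ` F. lrel (fst ` F) C (RA \<sigma> \<tau>)}"
        "Pt = Splits (map (\<lambda>\<tau>. ((\<tau>, ENeg B), (\<tau>, ENeg (EBoxL \<sigma> (ENeg D))))) ts)"
      using rp ncl labF ERhd by (auto simp: enum_of_def)
    have "good R S V F f (\<tau>, ENeg B) \<or> good R S V F f (\<tau>, ENeg (EBoxL \<sigma> (ENeg D)))" if "\<tau> \<in> set ts" for \<tau>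
    proof -
      have x: "\<tau> \<in> fst ` F" "lrel (fst ` F) C (RA \<sigma> \<tau>)" using ts(1) that by blast+
      have r: "R (f \<sigma>) (f \<tau>)" using lr[OF x(2)] by simp
      have eA: "ef R S V f (f \<sigma>) (ERhd B D)" using e(1) ERhd by simp
      have elB: "el B \<subseteq> fst ` F" "el D \<subseteq> fst ` F" "\<sigma> \<in> fst ` F" using e(2,3) ERhd by auto
      show ?thesis
      proof (cases "ef R S V f (f \<tau>) B")
        case True
        then obtain z where "S (f \<sigma>) (f \<tau>) z" "ef R S V f z D" using eA r by auto
        then have "ef R S V f (f \<tau>) (ENeg (EBoxL \<sigma> (ENeg D)))" by auto
        then have "good R S V F f (\<tau>, ENeg (EBoxL \<sigma> (ENeg D)))" unfolding good_def using x(1) elB by simp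
        then show ?thesis ..
      next
        case False
        then have "good R S V F f (\<tau>, ENeg B)" unfolding good_def using x(1) elB by simp
        then show ?thesis ..
      qed
    qed
    then show ?thesis unfolding ts(2) by (intro splits_ok[OF fs]) (auto simp: nth_mem)
  next
    case (EBoxL \<rho> B)
    obtain ts where ts: "set ts = {\<tau> \<in> fst ` F. lrel (fst ` F) C (SA \<rho> \<sigma> \<tau>)}" "Pt = Chain (map (\<lambda>\<tau>. (\<tau>, B)) ts)"
      using rp labF EBoxL by (auto simp: enum_of_def)
    have eA: "ef R S V f (f \<sigma>) (EBoxL \<rho> B)" using e(1) EBoxL by simp
    have elB: "el B \<subseteq> fst ` F" using e(2) EBoxL by simp
    have "\<forall>x\<in>set (map (\<lambda>\<tau>. (\<tau>, B)) ts). good R S V F f x"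
    proof
      fix x assume "x \<in> set (map (\<lambda>\<tau>. (\<tau>, B)) ts)"
      then obtain \<tau> where x0: "x = (\<tau>, B)" "\<tau> \<in> set ts" by auto
      then have x: "\<tau> \<in> fst ` F" "lrel (fst ` F) C (SA \<rho> \<sigma> \<tau>)" using ts(1) by blast+
      have "S (f \<rho>) (f \<sigma>) (f \<tau>)" using lr[OF x(2)] by simp
      then have "ef R S V f (f \<tau>) B" using eA by simp
      then show "good R S V F f x" unfolding good_def x0(1) using x(1) elB by simp
    qed
    then have "fsat W R S V (F \<union> set (map (\<lambda>\<tau>. (\<tau>, B)) ts)) f" by (rule fsat_ext_old[OF fs])
    from chain_ok[OF this] show ?thesis unfolding ts(2) .
  next
    case (ENeg A0)
    show ?thesis
    proof (cases A0)
      case (EVar p) then show ?thesis using rp nil ENeg by simp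
    next
      case (ENeg B)
      then have Pt: "Pt = Chain [(\<sigma>, B)]" using rp ncl \<open>A = ENeg A0\<close> by simp
      have "\<forall>x\<in>set [(\<sigma>, B)]. good R S V F f x" using e \<open>A = ENeg A0\<close> ENeg unfolding good_def by auto
      then show ?thesis using chain_ok fsat_ext_old[OF fs] Pt by metis
    next
      case (EImp B D)
      then have Pt: "Pt = Chain [(\<sigma>, B), (\<sigma>, ENeg D)]" using rp ncl \<open>A = ENeg A0\<close> by simp
      have "\<forall>x\<in>set [(\<sigma>, B), (\<sigma>, ENeg D)]. good R S V F f x"
        using e \<open>A = ENeg A0\<close> EImp unfolding good_def by auto
      then show ?thesis using chain_ok fsat_ext_old[OF fs] Pt by metis
    next
      case (EBox B)
      define \<nu> where "\<nu> = LR \<sigma> (LEAST n. LR \<sigma> n \<notin> lab T q)"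
      have Pt: "Pt = Chain [(\<nu>, ENeg B), (\<nu>, EBox B)]"
        using rp ncl \<open>A = ENeg A0\<close> EBox by (simp add: \<nu>_def Let_def)
      have nu: "\<nu> \<notin> fst ` F" unfolding \<nu>_def labF by (rule fresh_LR[OF fin])
      have ex: "\<exists>y. R (f \<sigma>) y \<and> \<not> ef R S V f y B" using e \<open>A = ENeg A0\<close> EBox by auto
      then obtain y0 where "y0 \<in> {y. R (f \<sigma>) y \<and> \<not> ef R S V f y B}" by blast
      from noeth_min[OF fr this] obtain y where y: "R (f \<sigma>) y" "\<not> ef R S V f y B"
        "\<forall>z. R y z \<longrightarrow> \<not> (R (f \<sigma>) z \<and> \<not> ef R S V f z B)" by blast
      have yb: "ef R S V f y (EBox B)" using y F(1) by auto
      have "fsat W R S V (F \<union> set [(\<nu>, ENeg B), (\<nu>, EBox B)]) (f(\<nu> := y))"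
      proof (rule fsat_ext_new[OF fs nu])
        show "y \<in> W" using y(1) F(7) by blast
        show "(\<exists>\<sigma>' n. \<nu> = LR \<sigma>' n \<and> \<sigma>' \<in> fst ` F \<and> R (f \<sigma>') y) \<or>
              (\<exists>\<sigma>' \<rho> n. \<nu> = LS \<sigma>' \<rho> n \<and> \<sigma>' \<in> fst ` F \<and> \<rho> \<in> fst ` F \<and> S (f \<rho>) (f \<sigma>') y)"
          using e y(1) unfolding \<nu>_def by blast
        show "\<forall>x\<in>set [(\<nu>, ENeg B), (\<nu>, EBox B)]. fst x = \<nu> \<and> el (snd x) \<subseteq> fst ` F \<and> ef R S V f y (snd x)"
          using e \<open>A = ENeg A0\<close> EBox y(2) yb by auto
      qed
      then show ?thesis using chain_ok Pt by metis
    next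
      case (EBoxL \<rho> B)
      define \<nu> where "\<nu> = LS \<sigma> \<rho> (LEAST n. LS \<sigma> \<rho> n \<notin> lab T q)"
      have Pt: "Pt = Chain [(\<nu>, ENeg B), (\<nu>, EBox B)]"
        using rp ncl \<open>A = ENeg A0\<close> EBoxL by (simp add: \<nu>_def Let_def)
      have nu: "\<nu> \<notin> fst ` F" unfolding \<nu>_def labF by (rule fresh_LS[OF fin])
      have ex: "\<exists>y. S (f \<rho>) (f \<sigma>) y \<and> \<not> ef R S V f y B" using e \<open>A = ENeg A0\<close> EBoxL by auto
      then obtain y0 where "y0 \<in> {y. S (f \<rho>) (f \<sigma>) y \<and> \<not> ef R S V f y B}" by blast
      from noeth_min[OF fr this] obtain y where y: "S (f \<rho>) (f \<sigma>) y" "\<not> ef R S V f y B"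
        "\<forall>z. R y z \<longrightarrow> \<not> (S (f \<rho>) (f \<sigma>) z \<and> \<not> ef R S V f z B)" by blast
      have yb: "ef R S V f y (EBox B)"
      proof (simp, intro allI impI)
        fix z assume z: "R y z"
        have "R (f \<rho>) y" using y(1) F(3) by blast
        then have "S (f \<rho>) y z" using z F(6) by blast
        then have "S (f \<rho>) (f \<sigma>) z" using y(1) F(5) by blast
        then show "ef R S V f z B" using y(3) z by blast
      qed
      have rho: "\<rho> \<in> fst ` F" using e \<open>A = ENeg A0\<close> EBoxL by auto
      have "fsat W R S V (F \<union> set [(\<nu>, ENeg B), (\<nu>, EBox B)]) (f(\<nu> := y))"
      proof (rule fsat_ext_new[OF fs nu])
        show "y \<in> W" using y(1) F(3) F(7) by blast
        show "(\<exists>\<sigma>' n. \<nu> = LR \<sigma>' n \<and> \<sigma>' \<in> fst ` F \<and> R (f \<sigma>') y) \<or>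
              (\<exists>\<sigma>' \<rho>' n. \<nu> = LS \<sigma>' \<rho>' n \<and> \<sigma>' \<in> fst ` F \<and> \<rho>' \<in> fst ` F \<and> S (f \<rho>') (f \<sigma>') y)"
          using e rho y(1) unfolding \<nu>_def by blast
        show "\<forall>x\<in>set [(\<nu>, ENeg B), (\<nu>, EBox B)]. fst x = \<nu> \<and> el (snd x) \<subseteq> fst ` F \<and> ef R S V f y (snd x)"
          using e \<open>A = ENeg A0\<close> EBoxL y(2) yb by auto
      qed
      then show ?thesis using chain_ok Pt by metis
    next
      case (ERhd B D)
      define \<nu> where "\<nu> = LR \<sigma> (LEAST n. LR \<sigma> n \<notin> lab T q)"
      have Pt: "Pt = Chain [(\<nu>, B), (\<nu>, EBoxL \<sigma> (ENeg D)), (\<nu>, EBox (ENeg B))]"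
        using rp ncl \<open>A = ENeg A0\<close> ERhd by (simp add: \<nu>_def Let_def)
      have nu: "\<nu> \<notin> fst ` F" unfolding \<nu>_def labF by (rule fresh_LR[OF fin])
      let ?U = "{y. R (f \<sigma>) y \<and> ef R S V f y B \<and> (\<forall>z. S (f \<sigma>) y z \<longrightarrow> \<not> ef R S V f z D)}"
      have ex: "\<exists>y. y \<in> ?U" using e \<open>A = ENeg A0\<close> ERhd by auto
      then obtain y0 where "y0 \<in> ?U" by blast
      from noeth_min[OF fr this] obtain y where y: "y \<in> ?U" "\<forall>z. R y z \<longrightarrow> z \<notin> ?U" by blast
      have yb: "ef R S V f y (EBox (ENeg B))"
      proof (simp, intro allI impI notI)
        fix z assume z: "R y z" "ef R S V f z B"
        have rz: "R (f \<sigma>) z" using y(1) z(1) F(1) by blast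
        have "S (f \<sigma>) y z" using y(1) z(1) F(6) by blast
        then have "\<forall>z'. S (f \<sigma>) z z' \<longrightarrow> \<not> ef R S V f z' D" using y(1) F(5) by blast
        then have "z \<in> ?U" using rz z(2) by blast
        then show False using y(2) z(1) by blast
      qed
      have yc: "ef R S V f y (EBoxL \<sigma> (ENeg D))" using y(1) by simp
      have "fsat W R S V (F \<union> set [(\<nu>, B), (\<nu>, EBoxL \<sigma> (ENeg D)), (\<nu>, EBox (ENeg B))]) (f(\<nu> := y))"
      proof (rule fsat_ext_new[OF fs nu])
        show "y \<in> W" using y(1) F(7) by blast
        show "(\<exists>\<sigma>' n. \<nu> = LR \<sigma>' n \<and> \<sigma>' \<in> fst ` F \<and> R (f \<sigma>') y) \<or>
              (\<exists>\<sigma>' \<rho> n. \<nu> = LS \<sigma>' \<rho> n \<and> \<sigma>' \<in> fst ` F \<and> \<rho> \<in> fst ` F \<and> S (f \<rho>) (f \<sigma>') y)"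
          using e y(1) unfolding \<nu>_def by blast
        show "\<forall>x\<in>set [(\<nu>, B), (\<nu>, EBoxL \<sigma> (ENeg D)), (\<nu>, EBox (ENeg B))].
                fst x = \<nu> \<and> el (snd x) \<subseteq> fst ` F \<and> ef R S V f y (snd x)"
          using e \<open>A = ENeg A0\<close> ERhd y(1) yb yc by auto
      qed
      then show ?thesis using chain_ok Pt by metis
    qed
  qed
qed

end

lemma tab_step:
  assumes fr: "IL_frame W R S" and hs: "horn_sat C W R S"
    and wf: "wf_tab T" and lf: "is_leaf T q" and fs: "fsat W R S V (branch_fms T q) f"
    and st: "sys_step C T T'"
  shows "\<exists>q' f'. prefix q q' \<and> is_leaf T' q' \<and> fsat W R S V (branch_fms T' q') f'"
proof -
  from sys_step_cases[OF st] show ?thesis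
  proof
    assume "T' = T" then show ?thesis using lf fs by (intro exI[of _ q] exI[of _ f]) simp
  next
    assume "\<exists>p \<sigma> A P. selected T p \<and> T p = Some (\<sigma>, A, Awake) \<and>
        (\<forall>q. is_leaf T q \<and> prefix p q \<longrightarrow> rule_pat C T q \<sigma> A (P q)) \<and> T' = stepT C T p \<sigma> A P"
    then obtain p \<sigma> A P where p: "T p = Some (\<sigma>, A, Awake)"
      "\<forall>q. is_leaf T q \<and> prefix p q \<longrightarrow> rule_pat C T q \<sigma> A (P q)" "T' = stepT C T p \<sigma> A P" by blast
    show ?thesis
    proof (cases "prefix p q")
      case True
      have mem: "(\<sigma>, A) \<in> branch_fms T q" using p(1) True unfolding branch_fms_def by blast
      have rp: "rule_pat C T q \<sigma> A (P q)" using p(2) lf True by blast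
      from rule_step[OF fr hs fs refl mem rp] obtain d f' where d:
        "d = [] \<or> patmap (P q) d \<noteq> None" "patmap (P q) (d @ [0]) = None"
        "fsat W R S V (branch_fms T q \<union> addset (P q) d) f'" by blast
      have "is_leaf T' (q @ d)" using leaf_new[where P=P and d=d and C=C and \<sigma>=\<sigma> and A=A, OF wf lf True d(1,2)] p(3) by simp
      moreover have "branch_fms T' (q @ d) = branch_fms T q \<union> addset (P q) d"
        using branch_new[OF wf lf True] p(3) by simp
      ultimately show ?thesis using d(3) by (intro exI[of _ "q @ d"] exI[of _ f']) simp
    next
      case False
      have "is_leaf T' q" using leaf_stays[OF wf lf False] p(3) by simp
      moreover have "branch_fms T' q = branch_fms T q"
        using branch_old[OF wf] lf p(3) by (simp add: is_leaf_def)
      ultimately show ?thesis using fs by (intro exI[of _ q] exI[of _ f]) simp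
    qed
  qed
qed

lemma step_wf: "wf_tab T \<Longrightarrow> sys_step C T T' \<Longrightarrow> wf_tab T'"
  using sys_step_cases wf_stepT by metis

lemma step_persist:
  assumes "wf_tab T" "sys_step C T T'" "T r = Some (a, b, m)"
  shows "\<exists>m'. T' r = Some (a, b, m')"
  using sys_step_cases[OF assms(2)] stepT_old[OF assms(1,3)] assms(3) by metis

lemma init_props:
  "wf_tab (init_tab A)" "is_leaf (init_tab A) []"
  "branch_fms (init_tab A) [] = {(Root, ENeg (emb A))}"
proof -
  show "wf_tab (init_tab A)" unfolding wf_tab_def init_tab_def
    by (auto simp: strict_prefix_def split: if_splits)
  show "is_leaf (init_tab A) []" unfolding is_leaf_def init_tab_def by simp
  show "branch_fms (init_tab A) [] = {(Root, ENeg (emb A))}"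
    unfolding branch_fms_def init_tab_def by auto
qed

theorem mainTheorem4:
  fixes X :: "fm set" and C :: "horn set" and A :: fm and Ts :: "nat \<Rightarrow> tableau"
  assumes horn: "\<forall>(W' :: 'w set) R' S'. IL_frame W' R' S' \<longrightarrow>
                    (frame_validates_ILX X W' R' S' \<longleftrightarrow> horn_sat C W' R' S')"
    and sys: "systematic_tableau C A Ts"
    and closes: "tab_closes Ts"
  shows "\<forall>(W :: 'w set) R S V. ILX_model C W R S V \<longrightarrow> (\<forall>x\<in>W. forces R S V x A)"
proof (intro allI impI ballI)
  fix W :: "'w set" and R S V x
  assume M: "ILX_model C W R S V" and xW: "x \<in> W"
  have fr: "IL_frame W R S" and hs: "horn_sat C W R S" using M unfolding ILX_model_def by auto
  have T0: "Ts 0 = init_tab A" and TS: "\<And>i. sys_step C (Ts i) (Ts (Suc i))"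
    using sys unfolding systematic_tableau_def by auto
  have wfs: "wf_tab (Ts i)" for i
  proof (induction i)
    case 0 then show ?case using T0 init_props(1) by simp
  next
    case (Suc i) then show ?case using step_wf TS by blast
  qed
  show "forces R S V x A"
  proof (rule ccontr)
    assume nf: "\<not> forces R S V x A"
    define inv where "inv i qf \<longleftrightarrow> is_leaf (Ts i) (fst qf) \<and> fsat W R S V (branch_fms (Ts i) (fst qf)) (snd qf)"
      for i qf
    define seq where "seq = rec_nat ([], \<lambda>_. x)
       (\<lambda>i qf. SOME qf'. prefix (fst qf) (fst qf') \<and> inv (Suc i) qf')"
    have seq0: "seq 0 = ([], \<lambda>_. x)" unfolding seq_def by simp
    have seqS: "seq (Suc i) = (SOME qf'. prefix (fst (seq i)) (fst qf') \<and> inv (Suc i) qf')" for i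
      unfolding seq_def by simp
    have inv0: "inv 0 ([], \<lambda>_. x)"
    proof -
      have "struct W R S {Root} (\<lambda>_. x)" unfolding struct_def using xW by simp
      moreover have "ef R S V (\<lambda>_. x) x (ENeg (emb A))" using nf by (simp add: ef_emb)
      ultimately show ?thesis unfolding inv_def fsat_def using T0 init_props(2,3) by (simp add: el_emb)
    qed
    have ex: "\<exists>qf'. prefix (fst qf) (fst qf') \<and> inv (Suc i) qf'" if "inv i qf" for i qf
    proof -
      from tab_step[OF fr hs wfs[of i] _ _ TS[of i], of "fst qf" V "snd qf"] that
      obtain q' f' where "prefix (fst qf) q'" "is_leaf (Ts (Suc i)) q'"
        "fsat W R S V (branch_fms (Ts (Suc i)) q') f'" unfolding inv_def by blast
      then show ?thesis unfolding inv_def by (intro exI[of _ "(q', f')"]) simp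
    qed
    have invs: "inv i (seq i)" for i
    proof (induction i)
      case 0 then show ?case using inv0 seq0 by simp
    next
      case (Suc i)
      from someI_ex[OF ex[OF Suc]] show ?case unfolding seqS by blast
    qed
    have pre: "prefix (fst (seq i)) (fst (seq (Suc i)))" for i
      using someI_ex[OF ex[OF invs[of i]]] unfolding seqS by blast
    define qq where "qq i = fst (seq i)" for i
    have mono: "prefix (qq i) (qq (i + n))" for i n
    proof (induction n)
      case 0 then show ?case by simp
    next
      case (Suc n) then show ?case using pre[of "i + n"] unfolding qq_def
        by (metis add_Suc_right prefix_order.order_trans)
    qed
    have mono': "i \<le> j \<Longrightarrow> prefix (qq i) (qq j)" for i j
      using mono[of i "j - i"] by simp
    have leafs: "is_leaf (Ts i) (qq i)" for i using invs[of i] unfolding inv_def qq_def by simp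
    have fsats: "fsat W R S V (branch_fms (Ts i) (qq i)) (snd (seq i))" for i
      using invs[of i] unfolding inv_def qq_def by simp
    have pre_in: "prefix r (qq i) \<Longrightarrow> Ts i r \<noteq> None" for r i
      using wfs[of i] leafs[of i] unfolding wf_tab_def is_leaf_def by blast
    define PP where "PP = {r. \<exists>i. prefix r (qq i)}"
    have persist: "Ts i r = Some (a, b, m) \<Longrightarrow> \<exists>m'. Ts (i + n) r = Some (a, b, m')" for i r a b m n
    proof (induction n arbitrary: m)
      case 0 then show ?case by simp
    next
      case (Suc n)
      then obtain m' where "Ts (i + n) r = Some (a, b, m')" by blast
      from step_persist[OF wfs TS this] show ?case by simp
    qed
    have content: "lim_content Ts r \<in> branch_fms (Ts k) (qq k)" if "prefix r (qq k)" for r k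
    proof -
      have ne: "Ts k r \<noteq> None" using pre_in[OF that] .
      define i0 where "i0 = (LEAST i. Ts i r \<noteq> None)"
      have i0: "Ts i0 r \<noteq> None" "i0 \<le> k" unfolding i0_def
        using LeastI[of "\<lambda>i. Ts i r \<noteq> None" k, OF ne] Least_le[of "\<lambda>i. Ts i r \<noteq> None" k, OF ne] by auto
      then obtain a b m where abm: "Ts i0 r = Some (a, b, m)" by auto
      then have lc: "lim_content Ts r = (a, b)" unfolding lim_content_def i0_def[symmetric] by simp
      from persist[OF abm, of "k - i0"] i0(2) obtain m' where "Ts k r = Some (a, b, m')" by auto
      then show ?thesis unfolding lc branch_fms_def using that by blast
    qed
    have lb: "lim_branch Ts PP"
      unfolding lim_branch_def
    proof (intro conjI allI impI)
      show "PP \<subseteq> lim_dom Ts" unfolding PP_def lim_dom_def using pre_in by blast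
      show ch: "is_chain PP" unfolding is_chain_def PP_def
      proof (intro ballI)
        fix a b assume "a \<in> {r. \<exists>i. prefix r (qq i)}" "b \<in> {r. \<exists>i. prefix r (qq i)}"
        then obtain i j where ij: "prefix a (qq i)" "prefix b (qq j)" by blast
        have "prefix a (qq (max i j))" "prefix b (qq (max i j))"
          using ij mono'[of i "max i j"] mono'[of j "max i j"] prefix_order.order_trans by auto
        then show "prefix a b \<or> prefix b a" using prefix_same_cases by blast
      qed
      fix Q assume Q: "Q \<subseteq> lim_dom Ts \<and> is_chain Q \<and> PP \<subseteq> Q"
      show "Q = PP"
      proof
        show "PP \<subseteq> Q" using Q by blast
        show "Q \<subseteq> PP"
        proof
          fix r assume r: "r \<in> Q"
          then obtain j where j: "Ts j r \<noteq> None" using Q unfolding lim_dom_def by blast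
          have "qq j \<in> PP" unfolding PP_def by blast
          then have "prefix r (qq j) \<or> prefix (qq j) r" using Q r unfolding is_chain_def by blast
          then show "r \<in> PP"
          proof
            assume "prefix r (qq j)" then show ?thesis unfolding PP_def by blast
          next
            assume a: "prefix (qq j) r"
            show ?thesis
            proof (cases "qq j = r")
              case True then show ?thesis unfolding PP_def by blast
            next
              case False
              then have "strict_prefix (qq j) r" using a by (simp add: strict_prefix_def)
              then show ?thesis using old_not_below_leaf[OF wfs j leafs] by blast
            qed
          qed
        qed
      qed
    qed
    then have "closed_set (lim_content Ts ` PP)" using closes unfolding tab_closes_def by blast
    then obtain \<sigma> B r1 r2 where r: "r1 \<in> PP" "r2 \<in> PP" "lim_content Ts r1 = (\<sigma>, B)"
      "lim_content Ts r2 = (\<sigma>, ENeg B)" unfolding closed_set_def by (metis imageE)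
    then obtain i j where ij: "prefix r1 (qq i)" "prefix r2 (qq j)" unfolding PP_def by blast
    have "prefix r1 (qq (max i j))" "prefix r2 (qq (max i j))"
      using ij mono'[of i "max i j"] mono'[of j "max i j"] prefix_order.order_trans by auto
    then have "(\<sigma>, B) \<in> branch_fms (Ts (max i j)) (qq (max i j))"
      "(\<sigma>, ENeg B) \<in> branch_fms (Ts (max i j)) (qq (max i j))"
      using content r(3,4) by metis+
    then show False using fsat_not_closed[OF fsats] unfolding closed_set_def by blast
  qed
qed

end
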